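(* In the one-dimensional perturbed elephant random walk with stops, suppose $\epsilon+r\neq1$ and $\gamma=\frac{1-\epsilon}{2}$. Then for all $t\ge1$ $$\mathbb{E}[X_t^2]=\frac{t}{\epsilon+r}-\frac{1}{(\epsilon+r)\Gamma(1-\epsilon-r)}\,\frac{\Gamma(t+1-\epsilon-r)}{\Gamma(t)},$$ and hence $\displaystyle\lim_{t\to\infty}\frac{\mathbb{E}[X_t^2]}{t}=\frac{1}{\epsilon+r}$.
   Context: One-dimensional perturbed elephant random walk with stops (perturbed ERWS): fix $p,q,r\in(0,1)$ with $p+q+r=1$, $\epsilon\in(0,1)$ and $s\in(0,1)$, and set $\gamma=p-q$. The steps $\sigma_1,\sigma_2,\dots$ take values in $\{-1,0,1\}$, $X_0=0$ and $X_t=\sigma_1+\dots+\sigma_t$. The first step satisfies $P(\sigma_1=1)=s$, $P(\sigma_1=-1)=1-s$. For $t\ge1$, conditionally on $\sigma_1,\dots,\sigma_t$, an index $k\in\{1,\dots,t\}$ is chosen uniformly at random. If $\sigma_k=\pm1$, then $\sigma_{t+1}=\sigma_k$ with probability $p$, $\sigma_{t+1}=-\sigma_k$ with probability $q$, and $\sigma_{t+1}=0$ with probability $r$. If $\sigma_k=0$, then $\sigma_{t+1}=1$ with probability $\epsilon/2$, $\sigma_{t+1}=-1$ with probability $\epsilon/2$, and $\sigma_{t+1}=0$ with probability $1-\epsilon$. *)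

theory Defs
  imports "HOL-Probability.Probability"
begin

text \<open>Law of the next step given the step sigma_k picked uniformly from the past.\<close>
definition erws_resp :: "real \<Rightarrow> real \<Rightarrow> real \<Rightarrow> real \<Rightarrow> int \<Rightarrow> int pmf" where
  "erws_resp p q r eps x =
     (if x = 0 then pmf_of_list [(1, eps/2), (-1, eps/2), (0, 1 - eps)]
      else pmf_of_list [(x, p), (-x, q), (0, r)])"

definition erws_first :: "real \<Rightarrow> int pmf" where
  "erws_first s = map_pmf (\<lambda>b. if b then 1 else -1) (bernoulli_pmf s)"

primrec erws_steps :: "real \<Rightarrow> real \<Rightarrow> real \<Rightarrow> real \<Rightarrow> real \<Rightarrow> nat \<Rightarrow> int list pmf" where
  "erws_steps p q r eps s 0 = return_pmf []"
| "erws_steps p q r eps s (Suc t) =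
     bind_pmf (erws_steps p q r eps s t) (\<lambda>xs.
       map_pmf (\<lambda>y. xs @ [y])
         (if xs = [] then erws_first s
          else bind_pmf (pmf_of_set {..<length xs}) (\<lambda>k. erws_resp p q r eps (xs ! k))))"

definition erws_second_moment :: "real \<Rightarrow> real \<Rightarrow> real \<Rightarrow> real \<Rightarrow> real \<Rightarrow> nat \<Rightarrow> real" where
  "erws_second_moment p q r eps s t =
     measure_pmf.expectation (erws_steps p q r eps s t) (\<lambda>xs. (real_of_int (sum_list xs))^2)"

end

theory Submission imports Defs begin

lemma exp_cong_pmf:
  "(\<And>x. x \<in> set_pmf M \<Longrightarrow> f x = g x) \<Longrightarrow> measure_pmf.expectation M f = measure_pmf.expectation M (g::_\<Rightarrow>real)"
  by (rule integral_cong_AE) (auto simp: AE_measure_pmf_iff)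

lemma exp_bind:
  fixes h :: "'b \<Rightarrow> real"
  assumes "finite (set_pmf p)" "\<And>x. x \<in> set_pmf p \<Longrightarrow> finite (set_pmf (f x))"
  shows "measure_pmf.expectation (bind_pmf p f) h =
         measure_pmf.expectation p (\<lambda>a. measure_pmf.expectation (f a) h)"
  using pmf_expectation_bind[OF assms(1) assms(2) subset_refl, where h=h]
    integral_measure_pmf[OF assms(1), where M=p and f="\<lambda>a. measure_pmf.expectation (f a) h"]
  by (simp add: mult.commute)

lemma exp_lin:
  fixes f g :: "'a \<Rightarrow> real"
  assumes "finite (set_pmf M)"
  shows "measure_pmf.expectation M (\<lambda>x. a * f x + b * g x + c) =
     a * measure_pmf.expectation M f + b * measure_pmf.expectation M g + c"
  using assms by (simp add: integrable_measure_pmf_finite)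

locale erws =
  fixes p q r eps s :: real
  assumes p0: "0 \<le> p" and q0: "0 \<le> q" and r0: "0 \<le> r" and sum1: "p + q + r = 1"
    and e0: "0 \<le> eps" and e1: "eps \<le> 1" and s0: "0 \<le> s" and s1: "s \<le> 1"
begin

lemma wf0: "pmf_of_list_wf [(1::int, eps/2), (-1, eps/2), (0, 1 - eps)]"
  using e0 e1 by (auto intro!: pmf_of_list_wfI)
lemma wf1: "pmf_of_list_wf [(x::int, p), (-x, q), (0, r)]"
  using p0 q0 r0 sum1 by (auto intro!: pmf_of_list_wfI)

lemma set_resp: "set_pmf (erws_resp p q r eps x) \<subseteq> {1, -1, 0, x, -x}"
  unfolding erws_resp_def using set_pmf_of_list[OF wf0] set_pmf_of_list[OF wf1, of x]
  by auto

lemma resp_exp: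
  assumes "x \<in> {-1,0,1}"
  shows "measure_pmf.expectation (erws_resp p q r eps x) h =
    (if x = 0 then h 1 * (eps/2) + h (-1) * (eps/2) + h 0 * (1 - eps)
     else h x * p + h (-x) * q + h 0 * r)"
proof -
  have "measure_pmf.expectation (erws_resp p q r eps x) h =
        (\<Sum>a\<in>{-1,0,1}. h a * pmf (erws_resp p q r eps x) a)"
    apply (rule integral_measure_pmf_real)
    using set_resp[of x] assms by auto
  also have "\<dots> = (if x = 0 then h 1 * (eps/2) + h (-1) * (eps/2) + h 0 * (1 - eps)
     else h x * p + h (-x) * q + h 0 * r)"
    using assms by (auto simp: erws_resp_def pmf_pmf_of_list[OF wf0] pmf_pmf_of_list[OF wf1])
  finally show ?thesis .
qed

definition L :: "nat \<Rightarrow> int list set" where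
  "L t = {xs. set xs \<subseteq> {-1,0,1} \<and> length xs = t}"

lemma set_steps: "set_pmf (erws_steps p q r eps s t) \<subseteq> L t"
proof (induction t)
  case 0 then show ?case by (simp add: L_def)
next
  case (Suc t)
  show ?case
  proof
    fix ys assume "ys \<in> set_pmf (erws_steps p q r eps s (Suc t))"
    then obtain xs y where xs: "xs \<in> set_pmf (erws_steps p q r eps s t)" and ys: "ys = xs @ [y]"
      and y: "y \<in> set_pmf (if xs = [] then erws_first s
          else bind_pmf (pmf_of_set {..<length xs}) (\<lambda>k. erws_resp p q r eps (xs ! k)))"
      by auto
    have xL: "xs \<in> L t" using xs Suc by auto
    have "y \<in> {-1,0,1}"
    proof (cases "xs = []")
      case True then show ?thesis using y s0 s1 by (auto simp: erws_first_def)
    next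
      case False
      then obtain k where k: "k < length xs" and yk: "y \<in> set_pmf (erws_resp p q r eps (xs ! k))"
      proof -
        have "{..<length xs} \<noteq> {}" using False by auto
        then show ?thesis using y that False by (auto simp: set_pmf_of_set)
      qed
      have "xs ! k \<in> {-1,0,1}" using xL k nth_mem unfolding L_def by blast
      then show ?thesis using set_resp[of "xs!k"] yk by auto
    qed
    then show "ys \<in> L (Suc t)" using xL ys by (auto simp: L_def)
  qed
qed

lemma finite_steps: "finite (set_pmf (erws_steps p q r eps s t))"
  by (rule finite_subset[OF set_steps]) (simp add: L_def finite_lists_length_eq)

lemma step_exp:
  assumes "t \<ge> 1"
  shows "measure_pmf.expectation (erws_steps p q r eps s (Suc t)) F =
    measure_pmf.expectation (erws_steps p q r eps s t)
      (\<lambda>xs. (\<Sum>k<t. measure_pmf.expectation (erws_resp p q r eps (xs!k)) (\<lambda>y. F (xs @ [y]))) / t)"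
proof -
  have fin: "finite (set_pmf (erws_resp p q r eps x))" for x
    by (rule finite_subset[OF set_resp]) auto
  show ?thesis
    apply (simp only: erws_steps.simps)
    apply (subst exp_bind)
      apply (rule finite_steps)
    subgoal for xs
      proof (cases "xs = []")
        case False
        then have "{..<length xs} \<noteq> {}" by auto
        then show ?thesis using False by (auto simp: erws_first_def fin set_pmf_of_set)
      qed (auto simp: erws_first_def)
    apply (rule exp_cong_pmf)
    subgoal for xs
      using set_steps[of t] assms
      apply (subgoal_tac "length xs = t")
       apply (auto simp: L_def)
      apply (subgoal_tac "{..<length xs} \<noteq> {}")
      apply (subst exp_bind)
        apply (auto simp: fin integral_pmf_of_set set_pmf_of_set)
      done
    done
qed

definition M :: "nat \<Rightarrow> real" where
  "M t = measure_pmf.expectation (erws_steps p q r eps s t) (\<lambda>xs. (real_of_int (sum_list xs))^2)"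
definition N :: "nat \<Rightarrow> real" where
  "N t = measure_pmf.expectation (erws_steps p q r eps s t) (\<lambda>xs. sum_list (map (\<lambda>x. (real_of_int x)^2) xs))"

lemma resp_sq:
  assumes "x \<in> {-1,0,1}"
  shows "measure_pmf.expectation (erws_resp p q r eps x) (\<lambda>y. (z + real_of_int y)^2) =
     z^2 + 2*(p-q)*z * real_of_int x + eps + (1-r-eps) * (real_of_int x)^2"
proof -
  have rr: "r = 1 - p - q" using sum1 by simp
  show ?thesis using assms by (subst resp_exp[OF assms]) (auto simp: power2_eq_square algebra_simps rr add_divide_distrib)
qed

lemma resp_q:
  assumes "x \<in> {-1,0,1}"
  shows "measure_pmf.expectation (erws_resp p q r eps x) (\<lambda>y. Q + (real_of_int y)^2) =
     Q + eps + (1-r-eps) * (real_of_int x)^2"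
proof -
  have rr: "r = 1 - p - q" using sum1 by simp
  show ?thesis using assms by (subst resp_exp[OF assms]) (auto simp: power2_eq_square algebra_simps rr add_divide_distrib)
qed

lemma sum_nth_map: "sum_list (map f xs) = (\<Sum>k<length xs. f (xs!k))"
  by (simp add: sum_list_sum_nth atLeast0LessThan)

lemma recM:
  assumes "t \<ge> 1"
  shows "M (Suc t) = (1 + 2*(p-q)/t) * M t + ((1-r-eps)/t) * N t + eps"
proof -
  have "M (Suc t) = measure_pmf.expectation (erws_steps p q r eps s t)
     (\<lambda>xs. (1 + 2*(p-q)/t) * (real_of_int (sum_list xs))^2 +
           ((1-r-eps)/t) * sum_list (map (\<lambda>x. (real_of_int x)^2) xs) + eps)"
    unfolding M_def
    apply (subst step_exp[OF assms])
    apply (rule exp_cong_pmf)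
  proof -
    fix xs assume "xs \<in> set_pmf (erws_steps p q r eps s t)"
    then have xL: "xs \<in> L t" using set_steps by auto
    then have len: "length xs = t" and mem: "\<And>k. k < t \<Longrightarrow> xs ! k \<in> {-1,0,1}"
      unfolding L_def using nth_mem by auto
    have "(\<Sum>k<t. measure_pmf.expectation (erws_resp p q r eps (xs!k)) (\<lambda>y. (real_of_int (sum_list (xs @ [y])))^2))
       = (\<Sum>k<t. (real_of_int (sum_list xs))^2 + 2*(p-q)*real_of_int (sum_list xs) * real_of_int (xs!k) + eps + (1-r-eps) * (real_of_int (xs!k))^2)"
      apply (rule sum.cong[OF refl])
      subgoal for k using resp_sq[OF mem[of k], of "real_of_int (sum_list xs)"] by simp
      done
    also have "\<dots> = t * (real_of_int (sum_list xs))^2 + 2*(p-q)*real_of_int (sum_list xs) * (\<Sum>k<t. real_of_int (xs!k)) + t * eps + (1-r-eps) * (\<Sum>k<t. (real_of_int (xs!k))^2)"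
      by (simp add: sum.distrib sum_distrib_left sum_distrib_right)
    also have "(\<Sum>k<t. real_of_int (xs!k)) = real_of_int (sum_list xs)"
      using sum_nth_map[of real_of_int xs] len by (simp add: sum_list_of_int[symmetric])
    also have "(\<Sum>k<t. (real_of_int (xs!k))^2) = sum_list (map (\<lambda>x. (real_of_int x)^2) xs)"
      using sum_nth_map[of "\<lambda>x. (real_of_int x)^2" xs] len by simp
    finally have eq: "(\<Sum>k<t. measure_pmf.expectation (erws_resp p q r eps (xs!k)) (\<lambda>y. (real_of_int (sum_list (xs @ [y])))^2)) = real t * (real_of_int (sum_list xs))\<^sup>2 + 2 * (p - q) * real_of_int (sum_list xs) * real_of_int (sum_list xs) + real t * eps + (1 - r - eps) * (\<Sum>x\<leftarrow>xs. (real_of_int x)\<^sup>2)" .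
    show "(\<Sum>k<t. measure_pmf.expectation (erws_resp p q r eps (xs!k)) (\<lambda>y. (real_of_int (sum_list (xs @ [y])))^2)) / real t =
     (1 + 2*(p-q)/t) * (real_of_int (sum_list xs))^2 +
           ((1-r-eps)/t) * sum_list (map (\<lambda>x. (real_of_int x)^2) xs) + eps"
      using assms by (simp only: eq) (simp add: field_simps power2_eq_square)
  qed
  also have "\<dots> = (1 + 2*(p-q)/t) * M t + ((1-r-eps)/t) * N t + eps"
    unfolding M_def N_def by (rule exp_lin[OF finite_steps])
  finally show ?thesis .
qed

lemma recN:
  assumes "t \<ge> 1"
  shows "N (Suc t) = (1 + (1-r-eps)/t) * N t + eps"
proof -
  have "N (Suc t) = measure_pmf.expectation (erws_steps p q r eps s t)
     (\<lambda>xs. (1 + (1-r-eps)/t) * sum_list (map (\<lambda>x. (real_of_int x)^2) xs) + 0 * 0 + eps)"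
    unfolding N_def
    apply (subst step_exp[OF assms])
    apply (rule exp_cong_pmf)
  proof -
    fix xs assume "xs \<in> set_pmf (erws_steps p q r eps s t)"
    then have xL: "xs \<in> L t" using set_steps by auto
    then have len: "length xs = t" and mem: "\<And>k. k < t \<Longrightarrow> xs ! k \<in> {-1,0,1}"
      unfolding L_def using nth_mem by auto
    let ?Q = "sum_list (map (\<lambda>x. (real_of_int x)^2) xs)"
    have "(\<Sum>k<t. measure_pmf.expectation (erws_resp p q r eps (xs!k)) (\<lambda>y. sum_list (map (\<lambda>x. (real_of_int x)^2) (xs @ [y]))))
       = (\<Sum>k<t. ?Q + eps + (1-r-eps) * (real_of_int (xs!k))^2)"
      apply (rule sum.cong[OF refl])
      subgoal for k using resp_q[OF mem[of k], of ?Q] by simp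
      done
    also have "\<dots> = t * ?Q + t * eps + (1-r-eps) * (\<Sum>k<t. (real_of_int (xs!k))^2)"
      by (simp add: sum.distrib sum_distrib_left distrib_left)
    also have "(\<Sum>k<t. (real_of_int (xs!k))^2) = ?Q"
      using sum_nth_map[of "\<lambda>x. (real_of_int x)^2" xs] len by simp
    finally show "(\<Sum>k<t. measure_pmf.expectation (erws_resp p q r eps (xs!k)) (\<lambda>y. sum_list (map (\<lambda>x. (real_of_int x)^2) (xs @ [y])))) / real t =
     (1 + (1-r-eps)/t) * ?Q + 0 * 0 + eps"
      using assms by (simp add: field_simps)
  qed
  also have "\<dots> = (1 + (1-r-eps)/t) * N t + 0 * 0 + eps"
    unfolding N_def using exp_lin[OF finite_steps, where b=0 and g="\<lambda>_. 0"] by simp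
  finally show ?thesis by simp
qed

lemma M1: "M 1 = 1" and N1: "N 1 = 1"
  using s0 s1 by (simp_all add: M_def N_def erws_first_def One_nat_def bind_return_pmf)

end

lemma not_npi: fixes a :: real assumes "a \<noteq> 0" "a > -1" shows "a \<notin> \<int>\<^sub>\<le>\<^sub>0"
proof
  assume "a \<in> \<int>\<^sub>\<le>\<^sub>0"
  then obtain n :: nat where "a = - real n" by (auto elim!: nonpos_Ints_cases')
  then show False using assms by (cases n) auto
qed

lemma pos_npi: fixes a :: real assumes "a > 0" shows "a \<notin> \<int>\<^sub>\<le>\<^sub>0"
  using assms by (auto elim!: nonpos_Ints_cases')

lemma G_step:
  fixes a :: real and t :: nat
  assumes "t \<ge> 1" "real t + a > 0"
  shows "Gamma (real (Suc t) + a) / Gamma (real (Suc t)) = Gamma (real t + a) / Gamma (real t) * ((real t + a) / real t)"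
proof -
  have "Gamma (real t + a + 1) = (real t + a) * Gamma (real t + a)"
    by (rule Gamma_plus1[OF pos_npi]) (use assms in simp)
  moreover have "Gamma (real t + 1) = real t * Gamma (real t)"
    by (rule Gamma_plus1[OF pos_npi]) (use assms in simp)
  ultimately show ?thesis using assms by (simp add: add_ac) (simp add: ac_simps)
qed

lemma closed_form:
  fixes m n :: "nat \<Rightarrow> real" and eps r :: real
  defines "a \<equiv> 1 - eps - r"
  defines "e \<equiv> eps + r"
  assumes e0: "e > 0" and a0: "a \<noteq> 0" and a1: "a > -1"
    and m1: "m 1 = 1" and n1: "n 1 = 1"
    and mrec: "\<And>t. t \<ge> 1 \<Longrightarrow> m (Suc t) = (1 + (1-eps)/t) * m t + (a/t) * n t + eps"
    and nrec: "\<And>t. t \<ge> 1 \<Longrightarrow> n (Suc t) = (1 + a/t) * n t + eps"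
  shows "t \<ge> 1 \<Longrightarrow> m t = real t / e - 1 / (e * Gamma a) * (Gamma (real t + a) / Gamma (real t))
     \<and> n t = eps / e * real t + r / (e * (a * Gamma a)) * (Gamma (real t + a) / Gamma (real t))"
proof (induction t rule: dec_induct)
  case base
  have "Gamma (1 + a) = a * Gamma a"
    using Gamma_plus1[OF not_npi[OF a0 a1]] by (simp add: add_ac)
  moreover have "Gamma a \<noteq> 0" by (rule Gamma_nonzero[OF not_npi[OF a0 a1]])
  moreover have "eps + r = e" "1 - a = e" unfolding a_def e_def by simp_all
  ultimately show ?case using m1 n1 e0 a0
    by (auto simp: field_simps)
next
  case (step t)
  have g: "Gamma a \<noteq> 0" by (rule Gamma_nonzero[OF not_npi[OF a0 a1]])
  have ta: "real t + a > 0" using step(1) a1 by simp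
  define G where "G = Gamma (real t + a) / Gamma (real t)"
  have GS: "Gamma (real (Suc t) + a) / Gamma (real (Suc t)) = G * ((real t + a) / real t)"
    unfolding G_def by (rule G_step[OF step(1) ta])
  have tp: "real t > 0" using step(1) by simp
  have IH: "m t = real t / e - 1 / (e * Gamma a) * G" "n t = eps / e * real t + r / (e * (a * Gamma a)) * G"
    using step(3) unfolding G_def by auto
  have ee: "eps = e - r" "a = 1 - e" unfolding a_def e_def by simp_all
  have a0': "1 - e \<noteq> 0" using a0 ee by simp
  show ?case unfolding GS mrec[OF step(1)] nrec[OF step(1)] IH
    using g tp e0 a0' unfolding ee
    by (auto simp: field_simps)
qed

lemma powr_over_lim:
  fixes a :: real assumes "a < 1"
  shows "(\<lambda>n::nat. real n powr a / (real n + 1)) \<longlonglongrightarrow> 0"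
proof (rule tendsto_sandwich[where f="\<lambda>_. 0" and h="\<lambda>n. real n powr (a - 1)"])
  show "\<forall>\<^sub>F n in sequentially. 0 \<le> real n powr a / (real n + 1)" by simp
  show "\<forall>\<^sub>F n in sequentially. real n powr a / (real n + 1) \<le> real n powr (a - 1)"
    using eventually_gt_at_top[of "0::nat"]
  proof eventually_elim
    case (elim n)
    have "real n powr a / (real n + 1) \<le> real n powr a / real n"
      using elim by (intro divide_left_mono) auto
    also have "\<dots> = real n powr (a - 1)" using elim by (simp add: powr_diff)
    finally show ?case .
  qed
  show "(\<lambda>n. real n powr (a - 1)) \<longlonglongrightarrow> 0"
    by (rule tendsto_neg_powr) (use assms filterlim_real_sequentially in auto)
qed simp

lemma G_lim:
  fixes a :: real assumes a0: "a \<noteq> 0" and a1: "a > -1" and a2: "a < 1"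
  shows "(\<lambda>t::nat. Gamma (real t + a) / Gamma (real t) / real t) \<longlonglongrightarrow> 0"
proof (rule LIMSEQ_imp_Suc)
  have g: "Gamma a \<noteq> 0" by (rule Gamma_nonzero[OF not_npi[OF a0 a1]])
  have "(\<lambda>n. Gamma a * (real n powr a / (real n + 1)) * inverse (Gamma_series a n))
        \<longlonglongrightarrow> Gamma a * 0 * inverse (Gamma a)"
    by (intro tendsto_intros powr_over_lim a2 g)
  then have L: "(\<lambda>n. Gamma a * (real n powr a / (real n + 1)) * inverse (Gamma_series a n)) \<longlonglongrightarrow> 0"
    by simp
  show "(\<lambda>n. Gamma (real (Suc n) + a) / Gamma (real (Suc n)) / real (Suc n)) \<longlonglongrightarrow> 0"
  proof (rule Lim_transform_eventually[OF L])
    show "\<forall>\<^sub>F n in sequentially. Gamma a * (real n powr a / (real n + 1)) * inverse (Gamma_series a n) =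
        Gamma (real (Suc n) + a) / Gamma (real (Suc n)) / real (Suc n)"
      using eventually_gt_at_top[of "0::nat"]
    proof eventually_elim
      case (elim n)
      have poch: "pochhammer a (n+1) = Gamma (a + real (n+1)) / Gamma a"
        by (rule pochhammer_Gamma[OF not_npi[OF a0 a1]])
      have fa0: "Gamma (1 + real n) = fact n" by (rule Gamma_fact)
      have fa: "fact n = Gamma (real (Suc n))"
        using fa0 by (simp add: add_ac)
      have pos: "Gamma (a + real (n+1)) > 0"
        by (rule Gamma_real_pos) (use a1 in simp)
      have ex: "exp (a * ln (real n)) = real n powr a" using elim by (simp add: powr_def)
      have fpos: "Gamma (real (Suc n)) > 0" by (rule Gamma_real_pos) simp
      have hp: "real n powr a \<noteq> 0" using elim by simp
      define F where "F = Gamma (1 + real n)"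
      define X where "X = Gamma (1 + (a + real n))"
      define K where "K = Gamma a * real n powr a"
      have K: "K \<noteq> 0" using hp g unfolding K_def by simp
      have D: "Gamma a * (real n powr a * F) + Gamma a * (real n * (real n powr a * F)) = K * (F + real n * F)"
        unfolding K_def by (simp add: algebra_simps)
      have Nm: "Gamma a * (real n powr a * X) = K * X" unfolding K_def by simp
      show ?case
        unfolding Gamma_series_def poch fa using g pos ex elim fpos
        apply (simp add: field_simps add_ac)
        apply (fold F_def X_def)
        apply (simp only: D Nm)
        using K by simp
    qed
  qed
qed

theorem mainTheorem7:
  fixes p q r eps s :: real
  assumes "0 < p" "p < 1" "0 < q" "q < 1" "0 < r" "r < 1" "p + q + r = 1"
    and "0 < eps" "eps < 1" and "0 < s" "s < 1"
    and "eps + r \<noteq> 1"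
    and "p - q = (1 - eps) / 2"
  shows "(\<forall>t::nat. t \<ge> 1 \<longrightarrow>
            erws_second_moment p q r eps s t =
              real t / (eps + r)
              - 1 / ((eps + r) * Gamma (1 - eps - r)) * (Gamma (real t + 1 - eps - r) / Gamma (real t)))
       \<and> ((\<lambda>t. erws_second_moment p q r eps s t / real t) \<longlonglongrightarrow> 1 / (eps + r))"
proof -
  interpret erws p q r eps s
    by unfold_locales (use assms in auto)
  have EM: "erws_second_moment p q r eps s t = M t" for t
    unfolding erws_second_moment_def M_def ..
  have pq: "2 * (p - q) = 1 - eps" using assms by simp
  have pe: "eps = 1 - 2*p + 2*q" using pq by simp
  have CF: "t \<ge> 1 \<Longrightarrow> M t = real t / (eps + r) - 1 / ((eps + r) * Gamma (1 - eps - r)) * (Gamma (real t + (1 - eps - r)) / Gamma (real t))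
     \<and> N t = eps / (eps + r) * real t + r / ((eps + r) * ((1 - eps - r) * Gamma (1 - eps - r))) * (Gamma (real t + (1 - eps - r)) / Gamma (real t))" for t
    apply (rule closed_form[where m=M and n=N])
    using assms M1 N1 apply auto[6]
    subgoal for t using recM[of t] unfolding pe by (simp add: algebra_simps)
    subgoal for t using recN[of t] by (simp add: algebra_simps)
    by simp
  have ex: "real t + (1 - eps - r) = real t + 1 - eps - r" for t by simp
  have P1: "\<forall>t::nat. t \<ge> 1 \<longrightarrow>
            erws_second_moment p q r eps s t =
              real t / (eps + r)
              - 1 / ((eps + r) * Gamma (1 - eps - r)) * (Gamma (real t + 1 - eps - r) / Gamma (real t))"
    using CF unfolding EM ex by blast
  have GL: "(\<lambda>t::nat. Gamma (real t + (1 - eps - r)) / Gamma (real t) / real t) \<longlonglongrightarrow> 0"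
    by (rule G_lim) (use assms in auto)
  have "(\<lambda>t. 1 / (eps + r) - 1 / ((eps + r) * Gamma (1 - eps - r)) * (Gamma (real t + (1 - eps - r)) / Gamma (real t) / real t))
     \<longlonglongrightarrow> 1 / (eps + r) - 1 / ((eps + r) * Gamma (1 - eps - r)) * 0"
    by (intro tendsto_intros GL)
  then have L: "(\<lambda>t. 1 / (eps + r) - 1 / ((eps + r) * Gamma (1 - eps - r)) * (Gamma (real t + (1 - eps - r)) / Gamma (real t) / real t))
     \<longlonglongrightarrow> 1 / (eps + r)" by simp
  have P2: "(\<lambda>t. erws_second_moment p q r eps s t / real t) \<longlonglongrightarrow> 1 / (eps + r)"
  proof (rule Lim_transform_eventually[OF L])
    show "\<forall>\<^sub>F t in sequentially. 1 / (eps + r) - 1 / ((eps + r) * Gamma (1 - eps - r)) * (Gamma (real t + (1 - eps - r)) / Gamma (real t) / real t)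
       = erws_second_moment p q r eps s t / real t"
      using eventually_ge_at_top[of "1::nat"]
    proof eventually_elim
      case (elim t)
      define K where "K = 1 / ((eps + r) * Gamma (1 - eps - r))"
      define Gt where "Gt = Gamma (real t + (1 - eps - r)) / Gamma (real t)"
      have m: "M t = real t / (eps + r) - K * Gt" using CF[OF elim] unfolding K_def Gt_def by blast
      have tn: "real t \<noteq> 0" using elim by simp
      have "M t / real t = real t / (eps + r) / real t - K * Gt / real t"
        unfolding m by (simp add: diff_divide_distrib)
      also have "real t / (eps + r) / real t = 1 / (eps + r)" using tn by simp
      finally show ?case unfolding EM K_def[symmetric] Gt_def[symmetric] by simp
    qed
  qed
  show ?thesis using P1 P2 by blast
qed

end
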